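(* Let $1\le k\le s$ and let $a_1,\dots,a_k,b_1,\dots,b_s$ be $k+s$ distinct integers. Put $D=\prod_{i=1}^k\prod_{j=1}^s|a_i-b_j|$. Then $$D\ge (2/3)^s\bigl(1!\,2!\cdots(2k-1)!\bigr)^{s/(2k)}.$$ *)

theory Defs
  imports Complex_Main
begin

end

theory Submission
  imports Defs
begin


lemma tri_psd:
  fixes S :: "int set" and \<sigma> :: "int \<Rightarrow> real" and m :: int
  assumes "finite S"
  shows "0 \<le> (\<Sum>x\<in>S. \<Sum>y\<in>S. \<sigma> x * \<sigma> y * real (nat (m - \<bar>x - y\<bar>)))"
proof -
  define lo where "lo = Min (insert 0 S) - m"
  define hi where "hi = Max (insert 0 S)"
  define ind where "ind z x = (if z \<le> x \<and> x < z + m then 1 else 0::real)" for z x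
  have key: "real (nat (m - \<bar>x - y\<bar>)) = (\<Sum>z\<in>{lo..hi}. ind z x * ind z y)" if "x\<in>S" "y\<in>S" for x y
  proof -
    have b: "x \<le> hi" "y \<le> hi" "lo \<le> x - m" "lo \<le> y - m" using that assms
      by (auto simp: hi_def lo_def)
    have "(\<Sum>z\<in>{lo..hi}. ind z x * ind z y) = (\<Sum>z\<in>{lo..hi}. if z \<in> {max x y - m + 1..min x y} then 1 else 0)"
      by (rule sum.cong) (auto simp: ind_def)
    also have "\<dots> = (\<Sum>z\<in>{max x y - m + 1..min x y}. (1::real))"
      by (rule sum.mono_neutral_cong_right) (use b in auto)
    also have "\<dots> = real (nat (m - \<bar>x - y\<bar>))" by simp
    finally show ?thesis by simp
  qed
  have "(\<Sum>x\<in>S. \<Sum>y\<in>S. \<sigma> x * \<sigma> y * real (nat (m - \<bar>x - y\<bar>)))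
      = (\<Sum>x\<in>S. \<Sum>y\<in>S. \<Sum>z\<in>{lo..hi}. (\<sigma> x * ind z x) * (\<sigma> y * ind z y))"
    by (intro sum.cong refl) (simp add: key sum_distrib_left mult_ac)
  also have "\<dots> = (\<Sum>z\<in>{lo..hi}. (\<Sum>x\<in>S. \<sigma> x * ind z x) * (\<Sum>y\<in>S. \<sigma> y * ind z y))"
  proof -
    have "(\<Sum>x\<in>S. \<Sum>y\<in>S. \<Sum>z\<in>{lo..hi}. (\<sigma> x * ind z x) * (\<sigma> y * ind z y))
        = (\<Sum>x\<in>S. \<Sum>z\<in>{lo..hi}. \<Sum>y\<in>S. (\<sigma> x * ind z x) * (\<sigma> y * ind z y))"
      by (rule sum.cong[OF refl], rule sum.swap)
    also have "\<dots> = (\<Sum>z\<in>{lo..hi}. \<Sum>x\<in>S. \<Sum>y\<in>S. (\<sigma> x * ind z x) * (\<sigma> y * ind z y))"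
      by (rule sum.swap)
    also have "\<dots> = (\<Sum>z\<in>{lo..hi}. (\<Sum>x\<in>S. \<sigma> x * ind z x) * (\<Sum>y\<in>S. \<sigma> y * ind z y))"
      by (simp add: sum_product)
    finally show ?thesis .
  qed
  also have "\<dots> \<ge> 0" by (intro sum_nonneg) simp
  finally show ?thesis .
qed


lemma tele:
  fixes h :: "nat \<Rightarrow> real"
  assumes "t < N"
  shows "(\<Sum>m\<in>{t+1..<N}. h (m+1) - 2 * h m + h (m-1)) = (h N - h (N-1)) - (h (t+1) - h t)"
  using assms
proof (induction N)
  case 0 then show ?case by simp
next
  case (Suc N)
  show ?case
  proof (cases "t = N")
    case True then show ?thesis by simp
  next
    case False
    then have "t < N" using Suc.prems by simp
    then have "(\<Sum>m\<in>{t+1..<Suc N}. h (m+1) - 2 * h m + h (m-1))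
       = (\<Sum>m\<in>{t+1..<N}. h (m+1) - 2 * h m + h (m-1)) + (h (N+1) - 2 * h N + h (N-1))"
      by (simp add: sum.atLeastLessThan_Suc)
    also have "\<dots> = (h N - h (N-1)) - (h (t+1) - h t) + (h (N+1) - 2 * h N + h (N-1))"
      using Suc.IH[OF \<open>t < N\<close>] by simp
    finally show ?thesis by simp
  qed
qed

lemma kernel:
  fixes h :: "nat \<Rightarrow> real"
  assumes "t \<le> N"
  shows "h t = h N + (\<Sum>m\<in>{1..<N}. (h (m+1) - 2 * h m + h (m-1)) * real (m - t))
              + (h (N-1) - h N) * real (N - t)"
  using assms
proof (induction t rule: inc_induct)
  case base
  have "(\<Sum>m\<in>{1..<N}. (h (m+1) - 2 * h m + h (m-1)) * real (m - N)) = 0"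
    by (intro sum.neutral) auto
  then show ?case by simp
next
  case (step t)
  let ?c = "\<lambda>m. h (m+1) - 2 * h m + h (m-1)"
  have split: "(\<Sum>m\<in>{1..<N}. ?c m * real (m - t))
      = (\<Sum>m\<in>{1..<N}. ?c m * real (m - Suc t)) + (\<Sum>m\<in>{1..<N}. if t < m then ?c m else 0)"
    by (subst sum.distrib[symmetric], intro sum.cong refl) (auto simp: of_nat_diff algebra_simps)
  have "(\<Sum>m\<in>{1..<N}. if t < m then ?c m else 0) = (\<Sum>m\<in>{t+1..<N}. ?c m)"
    by (rule sum.mono_neutral_cong_right) auto
  also have "\<dots> = (h N - h (N-1)) - (h (t+1) - h t)" using tele[OF step.hyps(2)] by simp
  finally have "(\<Sum>m\<in>{1..<N}. if t < m then ?c m else 0) = (h N - h (N-1)) - (h (t+1) - h t)" .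
  moreover have "real (N - t) = real (N - Suc t) + 1" using step.hyps(2) by simp
  ultimately show ?case using step.IH split by (simp add: algebra_simps)
qed


lemma qform:
  fixes S :: "int set" and \<sigma> :: "int \<Rightarrow> real" and h :: "nat \<Rightarrow> real" and N :: nat
  assumes fin: "finite S" and zs: "(\<Sum>x\<in>S. \<sigma> x) = 0"
    and bd: "\<And>x y. x \<in> S \<Longrightarrow> y \<in> S \<Longrightarrow> \<bar>x - y\<bar> \<le> int N"
    and cm: "\<And>m. 1 \<le> m \<Longrightarrow> m < N \<Longrightarrow> 0 \<le> h (m+1) - 2 * h m + h (m-1)"
    and cN: "0 \<le> h (N-1) - h N"
  shows "0 \<le> (\<Sum>x\<in>S. \<Sum>y\<in>S. \<sigma> x * \<sigma> y * h (nat \<bar>x - y\<bar>))"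
proof -
  let ?c = "\<lambda>m. h (m+1) - 2 * h m + h (m-1)"
  let ?r = "\<lambda>m x y. real (nat (int m - \<bar>x - y\<bar>))"
  have pt: "h (nat \<bar>x - y\<bar>) = h N + (\<Sum>m\<in>{1..<N}. ?c m * ?r m x y) + (h (N-1) - h N) * ?r N x y"
    if "x \<in> S" "y \<in> S" for x y
  proof -
    have le: "nat \<bar>x - y\<bar> \<le> N" using bd[OF that] by simp
    have "\<And>m. real (m - nat \<bar>x - y\<bar>) = ?r m x y" by (simp add: nat_diff_distrib)
    then show ?thesis using kernel[OF le, of h] by simp
  qed
  have "(\<Sum>x\<in>S. \<Sum>y\<in>S. \<sigma> x * \<sigma> y * h (nat \<bar>x - y\<bar>))
     = (\<Sum>x\<in>S. \<Sum>y\<in>S. \<sigma> x * \<sigma> y * h N + (\<Sum>m\<in>{1..<N}. ?c m * (\<sigma> x * \<sigma> y * ?r m x y))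
          + (h (N-1) - h N) * (\<sigma> x * \<sigma> y * ?r N x y))"
    by (intro sum.cong refl) (simp add: pt algebra_simps sum_distrib_left)
  also have "\<dots> = (\<Sum>x\<in>S. \<Sum>y\<in>S. \<sigma> x * \<sigma> y * h N) + (\<Sum>x\<in>S. \<Sum>y\<in>S. \<Sum>m\<in>{1..<N}. ?c m * (\<sigma> x * \<sigma> y * ?r m x y))
          + (h (N-1) - h N) * (\<Sum>x\<in>S. \<Sum>y\<in>S. \<sigma> x * \<sigma> y * ?r N x y)"
    by (simp add: sum.distrib sum_distrib_left)
  also have "(\<Sum>x\<in>S. \<Sum>y\<in>S. \<sigma> x * \<sigma> y * h N) = h N * ((\<Sum>x\<in>S. \<sigma> x) * (\<Sum>y\<in>S. \<sigma> y))"
    by (simp add: sum_product sum_distrib_left mult_ac)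
  also have "(\<Sum>x\<in>S. \<Sum>y\<in>S. \<Sum>m\<in>{1..<N}. ?c m * (\<sigma> x * \<sigma> y * ?r m x y))
      = (\<Sum>m\<in>{1..<N}. ?c m * (\<Sum>x\<in>S. \<Sum>y\<in>S. \<sigma> x * \<sigma> y * ?r m x y))"
  proof -
    have "(\<Sum>x\<in>S. \<Sum>y\<in>S. \<Sum>m\<in>{1..<N}. ?c m * (\<sigma> x * \<sigma> y * ?r m x y))
        = (\<Sum>x\<in>S. \<Sum>m\<in>{1..<N}. \<Sum>y\<in>S. ?c m * (\<sigma> x * \<sigma> y * ?r m x y))"
      by (rule sum.cong[OF refl], rule sum.swap)
    also have "\<dots> = (\<Sum>m\<in>{1..<N}. \<Sum>x\<in>S. \<Sum>y\<in>S. ?c m * (\<sigma> x * \<sigma> y * ?r m x y))"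
      by (rule sum.swap)
    also have "\<dots> = (\<Sum>m\<in>{1..<N}. ?c m * (\<Sum>x\<in>S. \<Sum>y\<in>S. \<sigma> x * \<sigma> y * ?r m x y))"
      by (simp add: sum_distrib_left)
    finally show ?thesis .
  qed
  finally have eq: "(\<Sum>x\<in>S. \<Sum>y\<in>S. \<sigma> x * \<sigma> y * h (nat \<bar>x - y\<bar>))
     = h N * ((\<Sum>x\<in>S. \<sigma> x) * (\<Sum>y\<in>S. \<sigma> y)) + (\<Sum>m\<in>{1..<N}. ?c m * (\<Sum>x\<in>S. \<Sum>y\<in>S. \<sigma> x * \<sigma> y * ?r m x y))
          + (h (N-1) - h N) * (\<Sum>x\<in>S. \<Sum>y\<in>S. \<sigma> x * \<sigma> y * ?r N x y)" .
  have t1: "0 \<le> (\<Sum>m\<in>{1..<N}. ?c m * (\<Sum>x\<in>S. \<Sum>y\<in>S. \<sigma> x * \<sigma> y * ?r m x y))"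
    by (intro sum_nonneg mult_nonneg_nonneg cm tri_psd[OF fin]) auto
  have t2: "0 \<le> (h (N-1) - h N) * (\<Sum>x\<in>S. \<Sum>y\<in>S. \<sigma> x * \<sigma> y * ?r N x y)"
    by (intro mult_nonneg_nonneg cN tri_psd[OF fin])
  show ?thesis unfolding eq zs using t1 t2 by simp
qed


lemma split2:
  fixes f :: "int \<Rightarrow> int \<Rightarrow> real"
  assumes "finite A" "finite B" "A \<inter> B = {}"
  shows "(\<Sum>x\<in>A\<union>B. \<Sum>y\<in>(A\<union>B)-{x}. f x y) =
    (\<Sum>x\<in>A. \<Sum>y\<in>A-{x}. f x y) + (\<Sum>x\<in>A. \<Sum>y\<in>B. f x y) + (\<Sum>x\<in>B. \<Sum>y\<in>A. f x y) + (\<Sum>x\<in>B. \<Sum>y\<in>B-{x}. f x y)"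
proof -
  have "(\<Sum>x\<in>A\<union>B. \<Sum>y\<in>(A\<union>B)-{x}. f x y) = (\<Sum>x\<in>A. \<Sum>y\<in>(A\<union>B)-{x}. f x y) + (\<Sum>x\<in>B. \<Sum>y\<in>(A\<union>B)-{x}. f x y)"
    using assms by (simp add: sum.union_disjoint)
  also have "(\<Sum>x\<in>A. \<Sum>y\<in>(A\<union>B)-{x}. f x y) = (\<Sum>x\<in>A. (\<Sum>y\<in>A-{x}. f x y) + (\<Sum>y\<in>B. f x y))"
  proof (intro sum.cong refl)
    fix x assume "x \<in> A"
    then have "(A\<union>B)-{x} = (A-{x}) \<union> B" using assms by auto
    then show "(\<Sum>y\<in>(A\<union>B)-{x}. f x y) = (\<Sum>y\<in>A-{x}. f x y) + (\<Sum>y\<in>B. f x y)"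
      using assms by (simp add: sum.union_disjoint Diff_Int_distrib2 Int_Diff)
  qed
  also have "(\<Sum>x\<in>B. \<Sum>y\<in>(A\<union>B)-{x}. f x y) = (\<Sum>x\<in>B. (\<Sum>y\<in>A. f x y) + (\<Sum>y\<in>B-{x}. f x y))"
  proof (intro sum.cong refl)
    fix x assume "x \<in> B"
    then have "(A\<union>B)-{x} = A \<union> (B-{x})" using assms by auto
    moreover have "A \<inter> (B - {x}) = {}" using assms by auto
    ultimately show "(\<Sum>y\<in>(A\<union>B)-{x}. f x y) = (\<Sum>y\<in>A. f x y) + (\<Sum>y\<in>B-{x}. f x y)"
      using assms by (simp add: sum.union_disjoint)
  qed
  finally show ?thesis by (simp add: sum.distrib)
qed

definition h0 :: "nat \<Rightarrow> real" where
  "h0 t = (if t = 0 then ln 2 else - ln (real t))"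

lemma h0_cm: "1 \<le> m \<Longrightarrow> 0 \<le> h0 (m+1) - 2 * h0 m + h0 (m-1)"
proof (cases "m = 1")
  case True then show ?thesis by (simp add: h0_def)
next
  case False
  assume "1 \<le> m"
  with False have m2: "m \<ge> 2" by simp
  have "2*2 \<le> m*m" by (rule mult_le_mono[OF m2 m2])
  then have pos: "(1::real) < real m * real m"
    by (metis of_nat_mult of_nat_less_iff of_nat_1 less_le_trans one_less_numeral_iff semiring_norm(76) mult_2 numeral_Bit0 one_plus_numeral)
  have e1: "ln (real (m+1)) + ln (real (m-1)) = ln (real (m+1) * real (m-1))"
    using m2 by (simp add: ln_mult)
  have e2: "ln (real (m+1) * real (m-1)) \<le> ln (real m * real m)"
    using m2 pos by (subst ln_le_cancel_iff) (auto simp: of_nat_diff algebra_simps)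
  have e3: "ln (real m * real m) = 2 * ln (real m)" using m2 by (simp add: ln_mult)
  have "h0 (m+1) - 2 * h0 m + h0 (m-1) = 2 * ln (real m) - (ln (real (m+1)) + ln (real (m-1)))"
    using m2 by (simp add: h0_def)
  then show ?thesis using e1 e2 e3 by linarith
qed

lemma h0_cN: "1 \<le> N \<Longrightarrow> 0 \<le> h0 (N-1) - h0 N"
  by (cases "N = 1") (auto simp: h0_def)


lemma energy:
  fixes A B :: "int set"
  assumes fA: "finite A" and fB: "finite B" and disj: "A \<inter> B = {}" and cd: "card A = card B"
  shows "(\<Sum>x\<in>A. \<Sum>y\<in>A-{x}. ln (real_of_int \<bar>x-y\<bar>)) + (\<Sum>x\<in>B. \<Sum>y\<in>B-{x}. ln (real_of_int \<bar>x-y\<bar>))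
         - 2 * (\<Sum>x\<in>A. \<Sum>y\<in>B. ln (real_of_int \<bar>x-y\<bar>)) \<le> 2 * real (card A) * ln 2"
proof -
  define S where "S = A \<union> B"
  define \<sigma> :: "int \<Rightarrow> real" where "\<sigma> x = (if x \<in> A then 1 else -1)" for x
  define lg where "lg x y = ln (real_of_int \<bar>x-y\<bar>)" for x y :: int
  have fS: "finite S" using fA fB by (simp add: S_def)
  have "(\<Sum>x\<in>S. \<sigma> x) = (\<Sum>x\<in>A. \<sigma> x) + (\<Sum>x\<in>B. \<sigma> x)"
    using fA fB disj by (simp add: S_def sum.union_disjoint)
  also have "(\<Sum>x\<in>A. \<sigma> x) = real (card A)" by (simp add: \<sigma>_def)
  also have "(\<Sum>x\<in>B. \<sigma> x) = - real (card B)"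
    using disj by (subst sum.cong[OF refl, of _ _ "\<lambda>_. -1"]) (auto simp: \<sigma>_def)
  finally have zs: "(\<Sum>x\<in>S. \<sigma> x) = 0" using cd by simp
  define N where "N = nat (Max (insert 0 S) - Min (insert 0 S)) + 1"
  have bd: "\<bar>x - y\<bar> \<le> int N" if "x \<in> S" "y \<in> S" for x y
  proof -
    have "x \<le> Max (insert 0 S)" "y \<le> Max (insert 0 S)" "Min (insert 0 S) \<le> x" "Min (insert 0 S) \<le> y"
      using that fS by auto
    then show ?thesis by (simp add: N_def)
  qed
  have N1: "1 \<le> N" by (simp add: N_def)
  have q: "0 \<le> (\<Sum>x\<in>S. \<Sum>y\<in>S. \<sigma> x * \<sigma> y * h0 (nat \<bar>x - y\<bar>))"
    by (rule qform[OF fS zs bd h0_cm h0_cN[OF N1]]) auto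
  have row: "(\<Sum>y\<in>S. \<sigma> x * \<sigma> y * h0 (nat \<bar>x - y\<bar>)) = ln 2 - (\<Sum>y\<in>S-{x}. \<sigma> x * \<sigma> y * lg x y)"
    if "x \<in> S" for x
  proof -
    have "(\<Sum>y\<in>S. \<sigma> x * \<sigma> y * h0 (nat \<bar>x - y\<bar>)) = \<sigma> x * \<sigma> x * h0 0 + (\<Sum>y\<in>S-{x}. \<sigma> x * \<sigma> y * h0 (nat \<bar>x - y\<bar>))"
      using that fS by (simp add: sum.remove)
    also have "\<sigma> x * \<sigma> x * h0 0 = ln 2" by (simp add: \<sigma>_def h0_def)
    also have "(\<Sum>y\<in>S-{x}. \<sigma> x * \<sigma> y * h0 (nat \<bar>x - y\<bar>)) = (\<Sum>y\<in>S-{x}. - (\<sigma> x * \<sigma> y * lg x y))"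
      by (intro sum.cong refl) (auto simp: h0_def lg_def)
    finally show ?thesis by (simp add: sum_negf)
  qed
  have "0 \<le> (\<Sum>x\<in>S. ln 2 - (\<Sum>y\<in>S-{x}. \<sigma> x * \<sigma> y * lg x y))"
    using q row by simp
  also have "\<dots> = real (card S) * ln 2 - (\<Sum>x\<in>S. \<Sum>y\<in>S-{x}. \<sigma> x * \<sigma> y * lg x y)"
    by (simp add: sum_subtractf)
  finally have q2: "(\<Sum>x\<in>S. \<Sum>y\<in>S-{x}. \<sigma> x * \<sigma> y * lg x y) \<le> real (card S) * ln 2" by simp
  have sp: "(\<Sum>x\<in>S. \<Sum>y\<in>S-{x}. \<sigma> x * \<sigma> y * lg x y) =
    (\<Sum>x\<in>A. \<Sum>y\<in>A-{x}. lg x y) - (\<Sum>x\<in>A. \<Sum>y\<in>B. lg x y) - (\<Sum>x\<in>B. \<Sum>y\<in>A. lg x y) + (\<Sum>x\<in>B. \<Sum>y\<in>B-{x}. lg x y)"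
  proof -
    have "(\<Sum>x\<in>S. \<Sum>y\<in>S-{x}. \<sigma> x * \<sigma> y * lg x y) =
      (\<Sum>x\<in>A. \<Sum>y\<in>A-{x}. \<sigma> x * \<sigma> y * lg x y) + (\<Sum>x\<in>A. \<Sum>y\<in>B. \<sigma> x * \<sigma> y * lg x y)
      + (\<Sum>x\<in>B. \<Sum>y\<in>A. \<sigma> x * \<sigma> y * lg x y) + (\<Sum>x\<in>B. \<Sum>y\<in>B-{x}. \<sigma> x * \<sigma> y * lg x y)"
      unfolding S_def by (rule split2[OF fA fB disj])
    also have "(\<Sum>x\<in>A. \<Sum>y\<in>A-{x}. \<sigma> x * \<sigma> y * lg x y) = (\<Sum>x\<in>A. \<Sum>y\<in>A-{x}. lg x y)"
      by (intro sum.cong refl) (auto simp: \<sigma>_def)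
    also have "(\<Sum>x\<in>A. \<Sum>y\<in>B. \<sigma> x * \<sigma> y * lg x y) = (\<Sum>x\<in>A. \<Sum>y\<in>B. - lg x y)"
      using disj by (intro sum.cong refl) (auto simp: \<sigma>_def)
    also have "(\<Sum>x\<in>B. \<Sum>y\<in>A. \<sigma> x * \<sigma> y * lg x y) = (\<Sum>x\<in>B. \<Sum>y\<in>A. - lg x y)"
      using disj by (intro sum.cong refl) (auto simp: \<sigma>_def)
    also have "(\<Sum>x\<in>B. \<Sum>y\<in>B-{x}. \<sigma> x * \<sigma> y * lg x y) = (\<Sum>x\<in>B. \<Sum>y\<in>B-{x}. lg x y)"
      using disj by (intro sum.cong refl) (auto simp: \<sigma>_def)
    finally show ?thesis by (simp add: sum_negf)
  qed
  have sw: "(\<Sum>x\<in>B. \<Sum>y\<in>A. lg x y) = (\<Sum>x\<in>A. \<Sum>y\<in>B. lg x y)"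
    by (subst sum.swap) (simp add: lg_def abs_minus_commute)
  have cS: "card S = 2 * card A" using fA fB disj cd by (simp add: S_def card_Un_disjoint)
  show ?thesis using q2 sp sw cS unfolding lg_def by simp
qed


lemma ln_fact_sum: "ln (fact n :: real) = (\<Sum>j=1..n. ln (real j))"
proof -
  have "(fact n :: real) = (\<Prod>j=1..n. real j)" by (simp add: fact_prod of_nat_prod)
  moreover have "ln (\<Prod>j=1..n. real j) = (\<Sum>j=1..n. ln (real j))" by (rule ln_prod) auto
  ultimately show ?thesis by simp
qed

lemma distinct_pos_ln:
  fixes T :: "int set"
  assumes "finite T" "\<And>t. t \<in> T \<Longrightarrow> 1 \<le> t"
  shows "ln (fact (card T) :: real) \<le> (\<Sum>t\<in>T. ln (real_of_int t))"
  using assms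
proof (induction "card T" arbitrary: T)
  case 0 then show ?case by simp
next
  case (Suc n)
  then have ne: "T \<noteq> {}" by auto
  define M where "M = Max T"
  have MT: "M \<in> T" using Suc.prems ne by (simp add: M_def)
  have "T \<subseteq> {1..M}" using Suc.prems by (auto simp: M_def)
  then have "card T \<le> card {1..M}" by (rule card_mono[rotated]) simp
  moreover have "1 \<le> M" using Suc.prems MT by simp
  ultimately have "int (card T) \<le> M" by simp
  then have cM: "real (card T) \<le> real_of_int M"
    by (metis of_int_le_iff of_int_of_nat_eq)
  have c': "card (T - {M}) = n" using Suc.hyps(2) MT by simp
  have IH: "ln (fact n :: real) \<le> (\<Sum>t\<in>T-{M}. ln (real_of_int t))"
    using Suc.hyps(1)[of "T - {M}"] c' Suc.prems by auto
  have "ln (fact (card T) :: real) = ln (real (card T)) + ln (fact n)"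
    using Suc.hyps(2)[symmetric] by (simp add: ln_mult)
  also have "\<dots> \<le> ln (real_of_int M) + (\<Sum>t\<in>T-{M}. ln (real_of_int t))"
    using IH cM Suc.hyps(2)[symmetric] by (intro add_mono) auto
  also have "\<dots> = (\<Sum>t\<in>T. ln (real_of_int t))"
    using Suc.prems MT by (simp add: sum.remove)
  finally show ?case .
qed

lemma vdm:
  fixes S :: "int set"
  assumes "finite S"
  shows "2 * (\<Sum>m=1..card S - 1. ln (fact m :: real)) \<le> (\<Sum>x\<in>S. \<Sum>y\<in>S-{x}. ln (real_of_int \<bar>x-y\<bar>))"
  using assms
proof (induction "card S" arbitrary: S)
  case 0 then show ?case by simp
next
  case (Suc n)
  let ?lg = "\<lambda>x y::int. ln (real_of_int \<bar>x-y\<bar>)"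
  have ne: "S \<noteq> {}" using Suc by auto
  define M where "M = Max S"
  define S' where "S' = S - {M}"
  have MS: "M \<in> S" using Suc.prems ne by (simp add: M_def)
  have fS': "finite S'" using Suc.prems by (simp add: S'_def)
  have c': "card S' = n" using Suc.hyps(2) MS by (simp add: S'_def)
  have IH: "2 * (\<Sum>m=1..n - 1. ln (fact m :: real)) \<le> (\<Sum>x\<in>S'. \<Sum>y\<in>S'-{x}. ?lg x y)"
    using Suc.hyps(1)[of S'] c' fS' by auto
  have SU: "S = S' \<union> {M}" using MS by (auto simp: S'_def)
  have "(\<Sum>x\<in>S. \<Sum>y\<in>S-{x}. ?lg x y) = (\<Sum>x\<in>S'. \<Sum>y\<in>S'-{x}. ?lg x y) + (\<Sum>x\<in>S'. \<Sum>y\<in>{M}. ?lg x y)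
      + (\<Sum>x\<in>{M}. \<Sum>y\<in>S'. ?lg x y) + (\<Sum>x\<in>{M}. \<Sum>y\<in>{M}-{x}. ?lg x y)"
    unfolding SU by (rule split2[OF fS']) (auto simp: S'_def)
  also have "(\<Sum>x\<in>S'. \<Sum>y\<in>{M}. ?lg x y) = (\<Sum>y\<in>S'. ?lg M y)"
    by (simp add: abs_minus_commute)
  finally have eq: "(\<Sum>x\<in>S. \<Sum>y\<in>S-{x}. ?lg x y) = (\<Sum>x\<in>S'. \<Sum>y\<in>S'-{x}. ?lg x y) + 2 * (\<Sum>y\<in>S'. ?lg M y)"
    by simp
  have inj: "inj_on (\<lambda>y. M - y) S'" by (rule inj_onI) simp
  have pos: "\<And>t. t \<in> (\<lambda>y. M - y) ` S' \<Longrightarrow> 1 \<le> t"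
  proof -
    fix t assume "t \<in> (\<lambda>y. M - y) ` S'"
    then obtain y where y: "y \<in> S'" "t = M - y" by auto
    have "y \<le> M" "y \<noteq> M" using y Suc.prems by (auto simp: S'_def M_def)
    then show "1 \<le> t" using y by simp
  qed
  have "ln (fact n :: real) \<le> (\<Sum>t\<in>(\<lambda>y. M - y) ` S'. ln (real_of_int t))"
    using distinct_pos_ln[of "(\<lambda>y. M - y) ` S'", OF _ pos] fS' card_image[OF inj] c' by simp
  also have "\<dots> = (\<Sum>y\<in>S'. ln (real_of_int (M - y)))" by (simp add: sum.reindex[OF inj])
  also have "\<dots> = (\<Sum>y\<in>S'. ?lg M y)"
  proof (intro sum.cong refl)
    fix y assume "y \<in> S'"
    then have "y \<le> M" using Suc.prems by (auto simp: S'_def M_def)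
    then show "ln (real_of_int (M - y)) = ?lg M y" by simp
  qed
  finally have new: "ln (fact n :: real) \<le> (\<Sum>y\<in>S'. ?lg M y)" .
  have "(\<Sum>m=1..card S - 1. ln (fact m :: real)) = (\<Sum>m=1..n - 1. ln (fact m :: real)) + ln (fact n)"
  proof (cases n)
    case 0 then show ?thesis using Suc.hyps(2)[symmetric] by simp
  next
    case (Suc n') then show ?thesis using Suc.hyps(2)[symmetric] by (simp add: \<open>n = Suc n'\<close>)
  qed
  then show ?case using eq IH new by simp
qed


lemma main_eq:
  fixes A B :: "int set"
  assumes fA: "finite A" and fB: "finite B" and disj: "A \<inter> B = {}" and cA: "card A = k" and cB: "card B = k"
  shows "((\<Sum>m=1..2*k-1. ln (fact m :: real)) - real k * ln 2) / 2 \<le> (\<Sum>y\<in>B. \<Sum>x\<in>A. ln (real_of_int \<bar>x-y\<bar>))"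
proof -
  let ?lg = "\<lambda>x y::int. ln (real_of_int \<bar>x-y\<bar>)"
  have fS: "finite (A \<union> B)" using fA fB by simp
  have cS: "card (A \<union> B) = 2 * k" using fA fB disj cA cB by (simp add: card_Un_disjoint)
  have v: "2 * (\<Sum>m=1..2*k-1. ln (fact m :: real)) \<le> (\<Sum>x\<in>A\<union>B. \<Sum>y\<in>(A\<union>B)-{x}. ?lg x y)"
    using vdm[OF fS] cS by simp
  have sp: "(\<Sum>x\<in>A\<union>B. \<Sum>y\<in>(A\<union>B)-{x}. ?lg x y) = (\<Sum>x\<in>A. \<Sum>y\<in>A-{x}. ?lg x y) + (\<Sum>x\<in>A. \<Sum>y\<in>B. ?lg x y)
      + (\<Sum>x\<in>B. \<Sum>y\<in>A. ?lg x y) + (\<Sum>x\<in>B. \<Sum>y\<in>B-{x}. ?lg x y)"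
    by (rule split2[OF fA fB disj])
  have sw1: "(\<Sum>x\<in>B. \<Sum>y\<in>A. ?lg x y) = (\<Sum>y\<in>B. \<Sum>x\<in>A. ?lg x y)"
    by (simp add: abs_minus_commute)
  have sw2: "(\<Sum>x\<in>A. \<Sum>y\<in>B. ?lg x y) = (\<Sum>y\<in>B. \<Sum>x\<in>A. ?lg x y)"
    by (rule sum.swap)
  have en: "(\<Sum>x\<in>A. \<Sum>y\<in>A-{x}. ?lg x y) + (\<Sum>x\<in>B. \<Sum>y\<in>B-{x}. ?lg x y) - 2 * (\<Sum>x\<in>A. \<Sum>y\<in>B. ?lg x y)
      \<le> 2 * real (card A) * ln 2"
    by (rule energy[OF fA fB disj]) (simp add: cA cB)
  show ?thesis using v sp sw1 sw2 en cA by simp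
qed

lemma reduce:
  fixes A :: "int set" and lam :: real
  assumes k1: "1 \<le> k"
    and hyp: "\<And>B0. finite B0 \<Longrightarrow> A \<inter> B0 = {} \<Longrightarrow> card B0 = k \<Longrightarrow> lam \<le> (\<Sum>y\<in>B0. \<Sum>x\<in>A. ln (real_of_int \<bar>x-y\<bar>))"
  shows "finite B \<Longrightarrow> A \<inter> B = {} \<Longrightarrow> card B = k + d \<Longrightarrow> lam * real (k + d) / real k \<le> (\<Sum>y\<in>B. \<Sum>x\<in>A. ln (real_of_int \<bar>x-y\<bar>))"
proof (induction d arbitrary: B)
  case 0
  then show ?case using hyp[of B] k1 by simp
next
  case (Suc d)
  define Q where "Q y = (\<Sum>x\<in>A. ln (real_of_int \<bar>x-y\<bar>))" for y
  have ne: "B \<noteq> {}" using Suc.prems by auto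
  obtain b0 where b0: "b0 \<in> B" "\<And>y. y \<in> B \<Longrightarrow> Q y \<le> Q b0"
  proof -
    have "Max (Q ` B) \<in> Q ` B" using Suc.prems ne by simp
    then obtain b0 where "b0 \<in> B" "Q b0 = Max (Q ` B)" by auto
    moreover have "\<And>y. y \<in> B \<Longrightarrow> Q y \<le> Max (Q ` B)" using Suc.prems by simp
    ultimately show ?thesis using that by metis
  qed
  define B' where "B' = B - {b0}"
  have fB': "finite B'" "A \<inter> B' = {}" "card B' = k + d" using Suc.prems b0 by (auto simp: B'_def)
  have IH: "lam * real (k + d) / real k \<le> (\<Sum>y\<in>B'. Q y)" using Suc.IH[OF fB'] by (simp add: Q_def)
  have "(\<Sum>y\<in>B'. Q y) \<le> (\<Sum>y\<in>B'. Q b0)" by (intro sum_mono b0(2)) (auto simp: B'_def)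
  also have "\<dots> = real (k + d) * Q b0" using fB' by simp
  finally have "lam * real (k + d) / real k \<le> real (k + d) * Q b0" using IH by linarith
  then have "real (k + d) * (lam / real k) \<le> real (k + d) * Q b0" by (simp add: field_simps)
  then have qb: "lam / real k \<le> Q b0" using k1 by (subst (asm) mult_le_cancel_left_pos) auto
  have "(\<Sum>y\<in>B. Q y) = Q b0 + (\<Sum>y\<in>B'. Q y)" using Suc.prems b0 by (simp add: B'_def sum.remove)
  moreover have "lam * real (k + Suc d) / real k = lam / real k + lam * real (k + d) / real k"
    using k1 by (simp add: field_simps)
  ultimately show ?case using qb IH by (simp add: Q_def)
qed

lemma ln23: "ln (2/3::real) \<le> - ln 2 / 2"
proof -
  have "ln (8::real) \<le> ln 9" by simp
  moreover have "ln (8::real) = 3 * ln 2" using ln_realpow[of 2 3] by simp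
  moreover have "ln (9::real) = 2 * ln 3" using ln_realpow[of 3 2] by simp
  moreover have "ln (2/3::real) = ln 2 - ln 3" by (simp add: ln_div)
  ultimately show ?thesis by simp
qed


theorem lemma3p3:
  fixes k s :: nat and a b :: "nat \<Rightarrow> int"
  assumes "1 \<le> k" and "k \<le> s"
    and "inj_on a {1..k}" and "inj_on b {1..s}"
    and "a ` {1..k} \<inter> b ` {1..s} = {}"
  shows "real_of_int (\<Prod>i=1..k. \<Prod>j=1..s. \<bar>a i - b j\<bar>)
          \<ge> (2/3) ^ s * (real (\<Prod>m=1..2*k-1. fact m)) powr (real s / (2 * real k))"
proof -
  define A where "A = a ` {1..k}"
  define B where "B = b ` {1..s}"
  have fA: "finite A" and fB: "finite B" by (simp_all add: A_def B_def)
  have cA: "card A = k" using card_image[OF assms(3)] by (simp add: A_def)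
  have cB: "card B = s" using card_image[OF assms(4)] by (simp add: B_def)
  have disj: "A \<inter> B = {}" using assms(5) by (simp add: A_def B_def)
  define SF where "SF = (\<Sum>m=1..2*k-1. ln (fact m :: real))"
  define lam where "lam = (SF - real k * ln 2) / 2"
  define LD where "LD = (\<Sum>y\<in>B. \<Sum>x\<in>A. ln (real_of_int \<bar>x-y\<bar>))"
  have hyp: "lam \<le> (\<Sum>y\<in>B0. \<Sum>x\<in>A. ln (real_of_int \<bar>x-y\<bar>))"
    if "finite B0" "A \<inter> B0 = {}" "card B0 = k" for B0
    using main_eq[OF fA that(1) that(2) cA that(3)] by (simp add: lam_def SF_def)
  have red: "lam * real s / real k \<le> LD"
  proof -
    have ks: "k + (s - k) = s" using assms(2) by simp
    have cB': "card B = k + (s - k)" using cB ks by simp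
    have "lam * real (k + (s - k)) / real k \<le> LD"
      unfolding LD_def by (rule reduce[OF assms(1) hyp fB disj cB'])
    then show ?thesis unfolding ks .
  qed
  define D where "D = (\<Prod>x\<in>A. \<Prod>y\<in>B. real_of_int \<bar>x-y\<bar>)"
  have Deq: "real_of_int (\<Prod>i=1..k. \<Prod>j=1..s. \<bar>a i - b j\<bar>) = D"
  proof -
    have "real_of_int (\<Prod>i=1..k. \<Prod>j=1..s. \<bar>a i - b j\<bar>) = (\<Prod>i=1..k. \<Prod>j=1..s. real_of_int \<bar>a i - b j\<bar>)"
      by simp
    also have "\<dots> = (\<Prod>i=1..k. \<Prod>y\<in>B. real_of_int \<bar>a i - y\<bar>)"
      unfolding B_def by (intro prod.cong refl, subst prod.reindex[OF assms(4)]) (simp add: o_def)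
    also have "\<dots> = D"
      unfolding D_def A_def by (subst prod.reindex[OF assms(3)]) (simp add: o_def)
    finally show ?thesis .
  qed
  have nz: "x \<in> A \<Longrightarrow> y \<in> B \<Longrightarrow> real_of_int \<bar>x-y\<bar> \<noteq> 0" for x y using disj by auto
  have ps: "x \<in> A \<Longrightarrow> y \<in> B \<Longrightarrow> 0 < real_of_int \<bar>x-y\<bar>" for x y
    using nz[of x y] by (simp del: of_int_abs)
  have Dpos: "0 < D" unfolding D_def
    by (intro prod_pos ps)
  have lnD: "ln D = LD"
  proof -
    have "ln D = (\<Sum>x\<in>A. ln (\<Prod>y\<in>B. real_of_int \<bar>x-y\<bar>))"
      unfolding D_def by (rule ln_prod[OF fA]) (use nz fB in auto)
    also have "\<dots> = (\<Sum>x\<in>A. \<Sum>y\<in>B. ln (real_of_int \<bar>x-y\<bar>))"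
      by (intro sum.cong refl ln_prod[OF fB]) (use nz in auto)
    also have "\<dots> = LD" unfolding LD_def by (rule sum.swap)
    finally show ?thesis .
  qed
  define C where "C = real (\<Prod>m=1..2*k-1. fact m)"
  have Cpos: "0 < C" unfolding C_def by (simp add: prod_pos)
  have lnC: "ln C = SF"
  proof -
    have "C = (\<Prod>m=1..2*k-1. (fact m :: real))" by (simp add: C_def of_nat_prod)
    then show ?thesis unfolding SF_def by (simp add: ln_prod)
  qed
  have k0: "0 < real k" using assms(1) by simp
  have "(2/3::real) ^ s = exp (real s * ln (2/3))" by (simp add: exp_of_nat_mult)
  moreover have "C powr (real s / (2 * real k)) = exp (real s / (2 * real k) * SF)"
    using Cpos lnC by (simp add: powr_def)
  ultimately have lhs: "(2/3::real) ^ s * C powr (real s / (2 * real k)) = exp (real s * ln (2/3) + real s / (2 * real k) * SF)"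
    by (simp add: exp_add)
  have "real s * ln (2/3) \<le> real s * (- ln 2 / 2)" by (intro mult_left_mono ln23) simp
  moreover have "lam * real s / real k = real s / (2 * real k) * SF + real s * (- ln 2 / 2)"
    using k0 by (simp add: lam_def field_simps)
  ultimately have "real s * ln (2/3) + real s / (2 * real k) * SF \<le> ln D" using red lnD by linarith
  then have "exp (real s * ln (2/3) + real s / (2 * real k) * SF) \<le> D" using Dpos by (metis exp_le_cancel_iff exp_ln)
  then show ?thesis using lhs Deq by (simp add: C_def)
qed

end
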